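(* Let $n\ge 1$ and let $a_1,\dots,a_n>0$. Then, as formal power series in $z$ (with coefficients polynomials in $t$), \[ \Theta_n(z,t)=\prod_{m=1}^{n}\Big(1+\frac{a_m z}{1-a_m z t}\Big) =\exp\Big(\sum_{j=1}^{\infty}\frac{z^j}{j}\,A_n(j)\,\big(t^j-(t-1)^j\big)\Big). \] Moreover, if $t\neq 0$ and $a_1,\dots,a_n$ are pairwise distinct, then, as an identity of rational functions in $z$, \[ \Theta_n(z,t)=\frac{(t-1)^n}{t^n}+(-1)^n\sum_{j=1}^{n}\frac{\prod_{m=1}^{n}\big(\frac{1-t}{a_j t}+\frac1{a_m}\big)}{\prod_{\ell=1,\ell\ne j}^{n}\big(\frac1{a_j}-\frac1{a_\ell}\big)}\cdot\frac{1}{zt-\frac1{a_j}}. \]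
   Context: Let $\boldsymbol a=(a_j)_{j\ge1}$ be a sequence of positive reals. For integers $n\ge1$, $k\ge0$ let $\mathcal M_{n,k}=\{(\ell_1,\dots,\ell_k)\in\mathbb N^k: n\ge\ell_1\ge\ell_2\ge\cdots\ge\ell_k\ge1\}$ (the $k$-multisets of $\{1,\dots,n\}$ written as non-increasing sequences). For $\vec\ell\in\mathcal M_{n,k}$ let $\sigma(\vec\ell)=|\{1\le j\le k-1:\ell_j=\ell_{j+1}\}|$ and $w(\vec\ell)=\prod_{j=1}^k a_{\ell_j}$. Define the polynomial $\theta_{n;k}(t)=\sum_{\vec\ell\in\mathcal M_{n,k}}w(\vec\ell)\,t^{\sigma(\vec\ell)}$ (with $\theta_{n;0}(t)=1$), the generating function $\Theta_n(z,t)=\sum_{k\ge0}\theta_{n;k}(t)z^k$, and the power sums $A_n(j)=\sum_{m=1}^n a_m^j$. *)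

theory Defs
  imports "HOL-Computational_Algebra.Formal_Power_Series"
begin

text \<open>k-multisets of {1..n}, written as non-increasing sequences (lists of length k).\<close>
definition multisets_seq :: "nat \<Rightarrow> nat \<Rightarrow> nat list set" where
  "multisets_seq n k = {ls. length ls = k \<and> sorted_wrt (\<ge>) ls \<and> set ls \<subseteq> {1..n}}"

text \<open>sigma: number of positions j (1 <= j <= k-1) with l_j = l_(j+1) (0-based here).\<close>
definition sigma_eq :: "nat list \<Rightarrow> nat" where
  "sigma_eq ls = card {j. Suc j < length ls \<and> ls ! j = ls ! Suc j}"

definition weight :: "(nat \<Rightarrow> real) \<Rightarrow> nat list \<Rightarrow> real" where
  "weight a ls = prod_list (map a ls)"

definition theta :: "(nat \<Rightarrow> real) \<Rightarrow> nat \<Rightarrow> nat \<Rightarrow> real \<Rightarrow> real" where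
  "theta a n k t = (\<Sum>ls\<in>multisets_seq n k. weight a ls * t ^ sigma_eq ls)"

definition Theta :: "(nat \<Rightarrow> real) \<Rightarrow> nat \<Rightarrow> real \<Rightarrow> real fps" where
  "Theta a n t = Abs_fps (\<lambda>k. theta a n k t)"

definition powsum :: "(nat \<Rightarrow> real) \<Rightarrow> nat \<Rightarrow> nat \<Rightarrow> real" where
  "powsum a n j = (\<Sum>m=1..n. a m ^ j)"

end

theory Submission
  imports Defs "HOL-Computational_Algebra.Polynomial_FPS"
begin
unbundle fps_syntax


lemma finite_msq: "finite (multisets_seq n k)"
proof -
  have "multisets_seq n k \<subseteq> {xs. set xs \<subseteq> {1..n} \<and> length xs = k}"
    by (auto simp: multisets_seq_def)
  thus ?thesis by (rule finite_subset) (simp add: finite_lists_length_eq)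
qed

lemma sigma_Nil[simp]: "sigma_eq [] = 0"
  by (simp add: sigma_eq_def)

lemma sigma_Cons: "sigma_eq (x # xs) = sigma_eq xs + (if xs \<noteq> [] \<and> hd xs = x then 1 else 0)"
proof -
  define S where "S = {j. Suc j < length xs \<and> xs ! j = xs ! Suc j}"
  have fin: "finite S" unfolding S_def by (rule finite_subset[of _ "{..<length xs}"]) auto
  have eq: "{j. Suc j < length (x#xs) \<and> (x#xs) ! j = (x#xs) ! Suc j}
      = (if xs \<noteq> [] \<and> hd xs = x then {0} else {}) \<union> Suc ` S"
  proof (intro set_eqI iffI)
    fix j assume "j \<in> {j. Suc j < length (x#xs) \<and> (x#xs) ! j = (x#xs) ! Suc j}"
    thus "j \<in> (if xs \<noteq> [] \<and> hd xs = x then {0} else {}) \<union> Suc ` S"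
      by (cases j) (auto simp: S_def hd_conv_nth)
  next
    fix j assume "j \<in> (if xs \<noteq> [] \<and> hd xs = x then {0} else {}) \<union> Suc ` S"
    thus "j \<in> {j. Suc j < length (x#xs) \<and> (x#xs) ! j = (x#xs) ! Suc j}"
      by (auto simp: S_def hd_conv_nth split: if_splits)
  qed
  have "sigma_eq (x # xs) = card ((if xs \<noteq> [] \<and> hd xs = x then {0} else {}) \<union> Suc ` S)"
    unfolding sigma_eq_def eq ..
  also have "\<dots> = (if xs \<noteq> [] \<and> hd xs = x then 1 else 0) + card (Suc ` S)"
    using fin by (subst card_Un_disjoint) auto
  also have "card (Suc ` S) = sigma_eq xs"
    by (simp add: card_image sigma_eq_def S_def)
  finally show ?thesis by simp
qed

lemma msq_0: "multisets_seq 0 k = (if k = 0 then {[]} else {})"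
  by (auto simp: multisets_seq_def)

lemma theta_0: "theta a 0 k t = (if k = 0 then 1 else 0)"
  by (simp add: theta_def msq_0 weight_def)

definition Pset :: "nat \<Rightarrow> nat \<Rightarrow> nat list set" where
  "Pset n k = {ls \<in> multisets_seq (Suc n) k. Suc n \<in> set ls}"

lemma msq_split: "multisets_seq n k = {ls \<in> multisets_seq (Suc n) k. Suc n \<notin> set ls}"
  unfolding multisets_seq_def by (auto simp: subset_iff le_Suc_eq)

lemma Pset_0: "Pset n 0 = {}"
  by (auto simp: Pset_def multisets_seq_def)

lemma Pset_Suc: "Pset n (Suc k) = (#) (Suc n) ` multisets_seq (Suc n) k"
proof (intro set_eqI iffI)
  fix ls assume "ls \<in> Pset n (Suc k)"
  then obtain x rest where ls: "ls = x # rest" and "length rest = k" and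
     s: "sorted_wrt (\<ge>) (x # rest)" and st: "set (x#rest) \<subseteq> {1..Suc n}" and m: "Suc n \<in> set (x # rest)"
    unfolding Pset_def multisets_seq_def by (cases ls) auto
  have "x = Suc n" using s st m by auto
  thus "ls \<in> (#) (Suc n) ` multisets_seq (Suc n) k"
    using ls \<open>length rest = k\<close> s st by (auto simp: multisets_seq_def)
next
  fix ls assume "ls \<in> (#) (Suc n) ` multisets_seq (Suc n) k"
  thus "ls \<in> Pset n (Suc k)" by (auto simp: Pset_def multisets_seq_def subset_iff)
qed

lemma hd_iff: "rest \<in> multisets_seq (Suc n) k \<Longrightarrow> (rest \<noteq> [] \<and> hd rest = Suc n) \<longleftrightarrow> Suc n \<in> set rest"
  by (cases rest) (auto simp: multisets_seq_def)

definition hsum where "hsum a n k t = (\<Sum>ls\<in>Pset n k. weight a ls * t ^ sigma_eq ls)"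

lemma theta_Suc: "theta a (Suc n) k t = theta a n k t + hsum a n k t"
proof -
  have e1: "multisets_seq (Suc n) k \<inter> {ls. Suc n \<in> set ls} = Pset n k"
    by (auto simp: Pset_def)
  have e2: "multisets_seq (Suc n) k - {ls. Suc n \<in> set ls} = multisets_seq n k"
    by (subst (2) msq_split) auto
  show ?thesis
    unfolding theta_def hsum_def
    using sum.Int_Diff[OF finite_msq, of "\<lambda>ls. weight a ls * t ^ sigma_eq ls" "Suc n" k "{ls. Suc n \<in> set ls}"]
    by (simp add: e1 e2)
qed

lemma hsum_0: "hsum a n 0 t = 0"
  by (simp add: hsum_def Pset_0)

lemma hsum_Suc: "hsum a n (Suc k) t = a (Suc n) * (t * hsum a n k t + theta a n k t)"
proof -
  have "hsum a n (Suc k) t = (\<Sum>ls\<in>multisets_seq (Suc n) k. weight a (Suc n # ls) * t ^ sigma_eq (Suc n # ls))"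
    unfolding hsum_def Pset_Suc by (subst sum.reindex) (auto simp: inj_on_def)
  also have "\<dots> = (\<Sum>ls\<in>multisets_seq (Suc n) k. a (Suc n) * (weight a ls * t ^ sigma_eq ls * (if Suc n \<in> set ls then t else 1)))"
    by (intro sum.cong refl) (auto simp: weight_def sigma_Cons hd_iff)
  also have "\<dots> = a (Suc n) * (\<Sum>ls\<in>multisets_seq (Suc n) k. weight a ls * t ^ sigma_eq ls * (if Suc n \<in> set ls then t else 1))"
    by (simp add: sum_distrib_left)
  also have "(\<Sum>ls\<in>multisets_seq (Suc n) k. weight a ls * t ^ sigma_eq ls * (if Suc n \<in> set ls then t else 1))
       = t * hsum a n k t + theta a n k t"
  proof -
    have e1: "multisets_seq (Suc n) k \<inter> {ls. Suc n \<in> set ls} = Pset n k"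
      by (auto simp: Pset_def)
    have e2: "multisets_seq (Suc n) k - {ls. Suc n \<in> set ls} = multisets_seq n k"
      by (subst (2) msq_split) auto
    have "(\<Sum>ls\<in>multisets_seq (Suc n) k. weight a ls * t ^ sigma_eq ls * (if Suc n \<in> set ls then t else 1))
       = (\<Sum>ls\<in>Pset n k. weight a ls * t ^ sigma_eq ls * (if Suc n \<in> set ls then t else 1))
        + (\<Sum>ls\<in>multisets_seq n k. weight a ls * t ^ sigma_eq ls * (if Suc n \<in> set ls then t else 1))"
      using sum.Int_Diff[OF finite_msq, of "\<lambda>ls. weight a ls * t ^ sigma_eq ls * (if Suc n \<in> set ls then t else 1)" "Suc n" k "{ls. Suc n \<in> set ls}"]
      by (simp add: e1 e2)
    also have "(\<Sum>ls\<in>Pset n k. weight a ls * t ^ sigma_eq ls * (if Suc n \<in> set ls then t else 1)) = t * hsum a n k t"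
      unfolding hsum_def sum_distrib_left by (intro sum.cong refl) (auto simp: Pset_def)
    also have "(\<Sum>ls\<in>multisets_seq n k. weight a ls * t ^ sigma_eq ls * (if Suc n \<in> set ls then t else 1)) = theta a n k t"
      unfolding theta_def by (intro sum.cong refl) (auto simp: multisets_seq_def)
    finally show ?thesis .
  qed
  finally show ?thesis .
qed




definition G :: "real \<Rightarrow> real fps" where "G c = Abs_fps (\<lambda>k. c ^ k)"

lemma G_inv: "(1 - fps_const c * fps_X) * G c = 1"
proof (rule fps_ext)
  fix k
  have "((1 - fps_const c * fps_X) * G c) $ k = G c $ k - c * (fps_X * G c) $ k"
    by (simp add: algebra_simps mult.assoc)
  also have "\<dots> = (1::real fps) $ k" by (cases k) (auto simp: G_def)
  finally show "((1 - fps_const c * fps_X) * G c) $ k = (1::real fps) $ k" .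
qed

lemma inverse_G: "inverse (1 - fps_const c * fps_X) = G c"
  by (rule fps_inverse_unique, rule G_inv)

lemma Theta_Suc: "Theta a (Suc n) t = Theta a n t * (1 + fps_const (a (Suc n)) * fps_X * G (a (Suc n) * t))"
proof -
  define H where "H = Abs_fps (\<lambda>k. hsum a n k t)"
  define \<alpha> where "\<alpha> = a (Suc n)"
  have 1: "Theta a (Suc n) t = Theta a n t + H"
    by (rule fps_ext) (simp add: Theta_def H_def theta_Suc)
  have 2: "H = fps_const \<alpha> * (fps_X * (fps_const t * H + Theta a n t))"
  proof (rule fps_ext)
    fix k show "H $ k = (fps_const \<alpha> * (fps_X * (fps_const t * H + Theta a n t))) $ k"
      by (cases k) (simp_all add: H_def hsum_0 hsum_Suc Theta_def \<alpha>_def)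
  qed
  have h2b: "H = fps_const \<alpha> * fps_X * fps_const t * H + fps_const \<alpha> * fps_X * Theta a n t"
    apply (subst (1) 2) apply (simp add: algebra_simps) done
  have 4: "H * (1 - fps_const (\<alpha> * t) * fps_X) = H - fps_const \<alpha> * fps_X * fps_const t * H"
    by (simp add: algebra_simps fps_const_mult[symmetric] del: fps_const_mult)
  have 3: "H * (1 - fps_const (\<alpha> * t) * fps_X) = fps_const \<alpha> * fps_X * Theta a n t"
    unfolding 4 by (metis h2b add_diff_cancel_left')
  have "H = H * ((1 - fps_const (\<alpha> * t) * fps_X) * G (\<alpha> * t))" by (simp add: G_inv)
  also have "\<dots> = fps_const \<alpha> * fps_X * Theta a n t * G (\<alpha> * t)"
    by (subst mult.assoc[symmetric], subst 3) simp
  finally show ?thesis unfolding 1 \<alpha>_def by (simp add: algebra_simps)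
qed

lemma Theta_0: "Theta a 0 t = 1"
  by (rule fps_ext) (simp add: Theta_def theta_0)

lemma Theta_prod: "Theta a n t = (\<Prod>m=1..n. 1 + fps_const (a m) * fps_X * G (a m * t))"
proof (induction n)
  case 0 thus ?case by (simp add: Theta_0)
next
  case (Suc n) thus ?case by (simp add: Theta_Suc prod.nat_ivl_Suc' mult.commute)
qed




definition Lser :: "(nat \<Rightarrow> real) \<Rightarrow> nat \<Rightarrow> real \<Rightarrow> real fps" where
  "Lser a n t = Abs_fps (\<lambda>j. if j = 0 then 0 else powsum a n j * (t ^ j - (t - 1) ^ j) / real j)"

lemma deriv_L: "fps_deriv (Lser a n t) =
  (\<Sum>m=1..n. fps_const (a m * t) * G (a m * t) - fps_const (a m * (t - 1)) * G (a m * (t - 1)))"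
proof (rule fps_ext)
  fix k
  have "fps_deriv (Lser a n t) $ k = powsum a n (Suc k) * (t ^ Suc k - (t - 1) ^ Suc k)"
    by (simp add: Lser_def del: of_nat_Suc)
  also have "\<dots> = (\<Sum>m=1..n. (a m * t) * (a m * t) ^ k - (a m * (t - 1)) * (a m * (t - 1)) ^ k)"
    unfolding powsum_def sum_distrib_right
    by (intro sum.cong refl) (simp only: power_mult_distrib power_Suc, simp add: algebra_simps)
  also have "\<dots> = (\<Sum>m=1..n. fps_const (a m * t) * G (a m * t) - fps_const (a m * (t - 1)) * G (a m * (t - 1))) $ k"
    by (simp add: fps_sum_nth G_def)
  finally show "fps_deriv (Lser a n t) $ k = (\<Sum>m=1..n. fps_const (a m * t) * G (a m * t) - fps_const (a m * (t - 1)) * G (a m * (t - 1))) $ k" .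
qed

lemma G_deriv: "fps_deriv (G c) = fps_const c * G c ^ 2"
proof -
  have "fps_deriv ((1 - fps_const c * fps_X) * G c) = 0" using G_inv by simp
  hence e: "(1 - fps_const c * fps_X) * fps_deriv (G c) = fps_const c * G c"
    by (simp add: algebra_simps)
  have "fps_deriv (G c) = (G c * (1 - fps_const c * fps_X)) * fps_deriv (G c)"
    using G_inv[of c] by (simp add: mult.commute)
  also have "\<dots> = G c * (fps_const c * G c)" by (simp add: mult.assoc e)
  finally show ?thesis by (simp add: power2_eq_square algebra_simps)
qed

lemma ring_aux:
  fixes A B C X Gc Gb D :: "'a::comm_ring_1"
  assumes "(1 - C*X)*Gc = 1" "(1 - B*X)*Gb = 1" "D = C*Gc^2" "C - B = A"
  shows "A*(Gc + X*D) = (1 + A*X*Gc)*(C*Gc - B*Gb)"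
proof -
  define u where "u = 1 - C*X"
  define v where "v = 1 - B*X"
  have hu: "u*Gc = 1" using assms(1) by (simp add: u_def)
  have hv: "v*Gb = 1" using assms(2) by (simp add: v_def)
  have e1: "C*X*Gc = Gc - 1" using assms(1) by (simp add: algebra_simps)
  have e2: "B*X*Gb = Gb - 1" using assms(2) by (simp add: algebra_simps)
  define S where "S = C*Gc - B*Gb - A*Gc*Gb"
  have "S*u*v = C*(u*Gc)*v - B*(v*Gb)*u - A*(u*Gc)*(v*Gb)"
    unfolding S_def by (simp add: algebra_simps)
  also have "\<dots> = C*v - B*u - A" by (simp only: hu hv) simp
  also have "\<dots> = 0" unfolding u_def v_def using assms(4) by (simp add: algebra_simps)
  finally have "S*u*v = 0" .
  hence "S*(u*Gc)*(v*Gb) = 0" by (metis mult.assoc mult.commute mult_zero_left)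
  hence S0: "S = 0" by (simp add: hu hv)
  have "A*(Gc + X*D) = A*Gc + A * Gc * (C*X*Gc)" by (simp add: assms(3) power2_eq_square algebra_simps)
  also have "\<dots> = A*Gc + A * Gc * (Gc - 1)" by (simp only: e1)
  also have "\<dots> = A*Gc*Gc" by (simp add: algebra_simps)
  finally have L: "A*(Gc + X*D) = A*Gc*Gc" .
  have "(1 + A*X*Gc)*(C*Gc - B*Gb) = C*Gc - B*Gb + A*Gc*(C*X*Gc) - A*Gc*(B*X*Gb)"
    by (simp add: algebra_simps)
  also have "\<dots> = C*Gc - B*Gb + A*Gc*(Gc - 1) - A*Gc*(Gb - 1)" by (simp only: e1 e2)
  also have "\<dots> = A*Gc*Gc + S" unfolding S_def by (simp add: algebra_simps)
  finally show ?thesis using L S0 by simp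
qed

lemma factor_deriv:
  "fps_deriv (1 + fps_const \<alpha> * fps_X * G (\<alpha> * t)) =
   (1 + fps_const \<alpha> * fps_X * G (\<alpha> * t)) *
   (fps_const (\<alpha> * t) * G (\<alpha> * t) - fps_const (\<alpha> * (t - 1)) * G (\<alpha> * (t - 1)))"
proof -
  have "fps_deriv (1 + fps_const \<alpha> * fps_X * G (\<alpha> * t)) =
       fps_const \<alpha> * (G (\<alpha> * t) + fps_X * fps_deriv (G (\<alpha> * t)))"
    by (simp add: algebra_simps)
  also have "\<dots> = (1 + fps_const \<alpha> * fps_X * G (\<alpha> * t)) *
      (fps_const (\<alpha> * t) * G (\<alpha> * t) - fps_const (\<alpha> * (t - 1)) * G (\<alpha> * (t - 1)))"
    by (rule ring_aux[OF G_inv G_inv G_deriv]) (simp add: algebra_simps)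
  finally show ?thesis .
qed

lemma prod_deriv:
  fixes f g :: "nat \<Rightarrow> real fps"
  assumes "\<And>m. fps_deriv (f m) = f m * g m"
  shows "fps_deriv (\<Prod>m=1..n. f m) = (\<Prod>m=1..n. f m) * (\<Sum>m=1..n. g m)"
proof (induction n)
  case 0 thus ?case by simp
next
  case (Suc n)
  have "fps_deriv (\<Prod>m=1..Suc n. f m) = fps_deriv (f (Suc n) * (\<Prod>m=1..n. f m))"
    by (simp add: prod.nat_ivl_Suc')
  also have "\<dots> = f (Suc n) * g (Suc n) * (\<Prod>m=1..n. f m) + f (Suc n) * ((\<Prod>m=1..n. f m) * (\<Sum>m=1..n. g m))"
    by (simp only: fps_deriv_mult Suc assms) (simp add: algebra_simps)
  also have "\<dots> = (\<Prod>m=1..Suc n. f m) * (\<Sum>m=1..Suc n. g m)"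
    by (simp add: prod.nat_ivl_Suc' sum.nat_ivl_Suc' algebra_simps)
  finally show ?case .
qed

lemma ode_unique:
  fixes Y L :: "real fps"
  assumes Y0: "Y $ 0 = 1" and L0: "L $ 0 = 0" and D: "fps_deriv Y = Y * fps_deriv L"
  shows "Y = fps_exp 1 oo L"
proof -
  define E where "E = fps_exp 1 oo L"
  have DE: "fps_deriv E = E * fps_deriv L"
    unfolding E_def by (simp add: fps_compose_deriv[OF L0])
  define iY where "iY = inverse Y"
  have YiY: "Y * iY = 1" unfolding iY_def by (rule inverse_mult_eq_1') (simp add: Y0)
  have DiY: "fps_deriv iY = - fps_deriv Y * iY ^ 2"
    unfolding iY_def by (rule fps_inverse_deriv) (simp add: Y0)
  have "fps_deriv (E * iY) = E * fps_deriv L * iY - E * (Y * iY) * fps_deriv L * iY"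
    by (simp add: DE DiY D power2_eq_square algebra_simps)
  also have "\<dots> = 0" by (simp add: YiY)
  finally have "fps_deriv (E * iY) = 0" .
  hence "E * iY = fps_const ((E * iY) $ 0)" by (simp only: fps_deriv_eq_0_iff)
  also have "(E * iY) $ 0 = 1" by (simp add: E_def iY_def Y0)
  finally have W: "E * iY = 1" by simp
  have "E = E * (iY * Y)" using YiY by (simp add: mult.commute)
  also have "\<dots> = Y" by (simp add: mult.assoc[symmetric] W)
  finally show ?thesis unfolding E_def by simp
qed

lemma part_exp: "Theta a n t = fps_exp 1 oo Lser a n t"
proof (rule ode_unique)
  have "multisets_seq n 0 = {[]}" by (auto simp: multisets_seq_def)
  thus "Theta a n t $ 0 = 1" by (simp add: Theta_def theta_def weight_def)
  show "Lser a n t $ 0 = 0" by (simp add: Lser_def)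
  show "fps_deriv (Theta a n t) = Theta a n t * fps_deriv (Lser a n t)"
    unfolding Theta_prod deriv_L by (rule prod_deriv) (rule factor_deriv)
qed




lemma fps_lin: "fps_of_poly [:1, -r:] = 1 - fps_const (r::real) * fps_X"
  by (rule fps_ext) (auto simp: coeff_pCons fps_X_nth split: nat.split)

lemma G_poly: "fps_of_poly [:1, -c:] * G c = 1"
  by (simp add: fps_lin G_inv)

lemma factor_eq: "1 + fps_const \<alpha> * fps_X * G (\<alpha> * t) = fps_of_poly [:1, -(\<alpha>*(t-1)):] * G (\<alpha> * t)"
proof -
  have h: "1 = G (\<alpha> * t) - fps_const (\<alpha> * t) * fps_X * G (\<alpha> * t)"
    using G_inv[of "\<alpha> * t"] by (simp add: algebra_simps)
  have "1 + fps_const \<alpha> * fps_X * G (\<alpha> * t) = G (\<alpha> * t) - fps_const (\<alpha> * t) * fps_X * G (\<alpha> * t) + fps_const \<alpha> * fps_X * G (\<alpha> * t)"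
    by (subst (1) h) simp
  also have "\<dots> = G (\<alpha> * t) - fps_const (\<alpha> * (t - 1)) * fps_X * G (\<alpha> * t)"
  proof -
    have r: "C = B + A \<Longrightarrow> Gg - C * X * Gg + A * X * Gg = Gg - B * X * Gg" for A B C X Gg :: "real fps"
      by (simp add: algebra_simps)
    show ?thesis by (rule r) (simp add: algebra_simps)
  qed
  also have "\<dots> = fps_of_poly [:1, -(\<alpha>*(t-1)):] * G (\<alpha> * t)"
    by (subst fps_lin) (simp add: algebra_simps)
  finally show ?thesis .
qed

lemma lin_prod_deg:
  fixes f :: "nat \<Rightarrow> real"
  assumes "finite S"
  shows "degree (\<Prod>m\<in>S. [:1, - f m:]) \<le> card S \<and> coeff (\<Prod>m\<in>S. [:1, - f m:]) (card S) = (\<Prod>m\<in>S. - f m)"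
  using assms
proof (induction S rule: finite_induct)
  case empty thus ?case by simp
next
  case (insert x S)
  define P where "P = (\<Prod>m\<in>S. [:1, - f m:])"
  have eq: "(\<Prod>m\<in>insert x S. [:1, - f m:]) = P + pCons 0 (smult (- f x) P)"
    using insert by (simp add: P_def)
  have dP: "degree P \<le> card S" and cP: "coeff P (card S) = (\<Prod>m\<in>S. - f m)"
    using insert by (simp_all add: P_def)
  have "degree (P + pCons 0 (smult (- f x) P)) \<le> Suc (card S)"
  proof (rule order.trans[OF degree_add_le_max])
    have "degree (pCons 0 (smult (- f x) P)) \<le> Suc (degree (smult (- f x) P))" by (rule degree_pCons_le)
    also have "\<dots> \<le> Suc (card S)" using degree_smult_le[of "- f x" P] dP by simp
    finally show "max (degree P) (degree (pCons 0 (smult (- f x) P))) \<le> Suc (card S)" using dP by simp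
  qed
  moreover have "coeff (P + pCons 0 (smult (- f x) P)) (Suc (card S)) = - f x * (\<Prod>m\<in>S. - f m)"
    using dP cP by (simp add: coeff_eq_0)
  ultimately show ?case using insert eq by simp
qed


lemma sign_aux: "n \<ge> 1 \<Longrightarrow> (-1::real) ^ n * (-1) ^ (n - 1) = -1"
proof -
  assume "n \<ge> 1"
  then obtain m where m: "n = Suc m" by (cases n) auto
  have "(-1::real)^m * (-1)^m = 1" by (simp add: power_mult_distrib[symmetric])
  thus ?thesis by (simp add: m)
qed

lemma part_frac:
  fixes a :: "nat \<Rightarrow> real" and n :: nat and t :: real
  assumes n1: "n \<ge> 1" and pos: "\<And>m. m \<in> {1..n} \<Longrightarrow> a m > 0" and t0: "t \<noteq> 0"
    and inj: "inj_on a {1..n}"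
  shows "Theta a n t =
             fps_const ((t - 1) ^ n / t ^ n)
             + (\<Sum>j=1..n. fps_const ((-1) ^ n *
                   (\<Prod>m=1..n. (1 - t) / (a j * t) + 1 / a m) /
                   (\<Prod>l\<in>{1..n} - {j}. 1 / a j - 1 / a l))
                 * inverse (fps_const t * fps_X - fps_const (1 / a j)))"
proof -
  define S where "S = {1..n}"
  define c where "c m = a m * t" for m
  define GG where "GG = (\<Prod>m\<in>S. G (c m))"
  define Qp where "Qp = (\<Prod>m\<in>S. [:1, - c m:])"
  define p where "p = (\<Prod>m\<in>S. [:1, - (a m * (t - 1)):])"
  define K where "K j = (-1) ^ n * (\<Prod>m=1..n. (1 - t) / (a j * t) + 1 / a m) /
                   (\<Prod>l\<in>{1..n} - {j}. 1 / a j - 1 / a l)" for j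
  define C0 where "C0 = (t - 1) ^ n / t ^ n"
  define q where "q = smult C0 Qp + (\<Sum>j\<in>S. smult (- a j * K j) (\<Prod>m\<in>S-{j}. [:1, - c m:]))"
  have fin: "finite S" by (simp add: S_def)
  have cardS: "card S = n" by (simp add: S_def)
  have anz: "m \<in> S \<Longrightarrow> a m \<noteq> 0" for m using pos[of m] by (simp add: S_def)
  have QG: "fps_of_poly Qp * GG = 1"
    unfolding Qp_def GG_def fps_of_poly_prod prod.distrib[symmetric] by (simp add: G_poly)
  have Gj: "G (c j) = fps_of_poly (\<Prod>m\<in>S-{j}. [:1, - c m:]) * GG" if j: "j \<in> S" for j
  proof -
    have "GG = G (c j) * (\<Prod>m\<in>S-{j}. G (c m))"
      unfolding GG_def using fin j by (simp add: prod.remove)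
    hence "fps_of_poly (\<Prod>m\<in>S-{j}. [:1, - c m:]) * GG
        = G (c j) * (\<Prod>m\<in>S-{j}. fps_of_poly [:1, - c m:] * G (c m))"
      by (simp add: fps_of_poly_prod prod.distrib mult_ac)
    also have "\<dots> = G (c j)" by (simp add: G_poly)
    finally show ?thesis by simp
  qed
  have inv: "inverse (fps_const t * fps_X - fps_const (1 / a j)) = fps_const (- a j) * G (c j)"
    if j: "j \<in> S" for j
  proof (rule fps_inverse_unique)
    have "(fps_const t * fps_X - fps_const (1 / a j)) * fps_const (- a j) = 1 - fps_const (c j) * fps_X"
      using anz[OF j] by (simp add: algebra_simps c_def)
    hence "(fps_const t * fps_X - fps_const (1 / a j)) * (fps_const (- a j) * G (c j))
        = (1 - fps_const (c j) * fps_X) * G (c j)" by (simp add: mult.assoc[symmetric])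
    thus "(fps_const t * fps_X - fps_const (1 / a j)) * (fps_const (- a j) * G (c j)) = 1"
      by (simp add: G_inv)
  qed
  have LHS: "Theta a n t = fps_of_poly p * GG"
    unfolding Theta_prod p_def GG_def fps_of_poly_prod prod.distrib[symmetric] S_def c_def
    by (intro prod.cong refl) (rule factor_eq)
  have RHS: "fps_const C0 + (\<Sum>j=1..n. fps_const (K j) * inverse (fps_const t * fps_X - fps_const (1 / a j)))
      = fps_of_poly q * GG"
  proof -
    have "fps_of_poly q * GG = fps_const C0 * (fps_of_poly Qp * GG)
        + (\<Sum>j\<in>S. fps_const (- a j * K j) * (fps_of_poly (\<Prod>m\<in>S-{j}. [:1, - c m:]) * GG))"
      unfolding q_def fps_of_poly_add fps_of_poly_sum fps_of_poly_smult
      by (simp only: distrib_right sum_distrib_right mult.assoc)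
    also have "\<dots> = fps_const C0 + (\<Sum>j\<in>S. fps_const (K j) * (fps_const (- a j) * G (c j)))"
      by (simp add: QG Gj mult.assoc[symmetric] cong: sum.cong, intro sum.cong refl, simp add: mult.commute)
    also have "\<dots> = fps_const C0 + (\<Sum>j=1..n. fps_const (K j) * inverse (fps_const t * fps_X - fps_const (1 / a j)))"
      unfolding S_def by (intro arg_cong2[where f="(+)"] refl sum.cong) (simp_all add: inv S_def)
    finally show ?thesis by simp
  qed
  have degp: "degree p \<le> n" and cp: "coeff p n = (\<Prod>m\<in>S. - (a m * (t - 1)))"
    using lin_prod_deg[OF fin, of "\<lambda>m. a m * (t - 1)"] unfolding p_def cardS by auto
  have degQ: "degree Qp \<le> n" and cQ: "coeff Qp n = (\<Prod>m\<in>S. - c m)"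
    using lin_prod_deg[OF fin, of c] unfolding Qp_def cardS by auto
  have degj: "degree (\<Prod>m\<in>S-{j}. [:1, - c m:]) \<le> n - 1" if j: "j \<in> S" for j
  proof -
    have "card (S - {j}) = n - 1" using j fin cardS by simp
    thus ?thesis using lin_prod_deg[of "S - {j}" c] fin by simp
  qed
  have n0: "n > 0" using n1 by simp
  have degsum: "degree (\<Sum>j\<in>S. smult (- a j * K j) (\<Prod>m\<in>S-{j}. [:1, - c m:])) \<le> n - 1"
    by (rule degree_sum_le[OF fin]) (rule order.trans[OF degree_smult_le degj])
  have degq: "degree q \<le> n"
    unfolding q_def
    by (rule order.trans[OF degree_add_le_max]) (use degsum degree_smult_le[of C0 Qp] degQ in auto)
  have cq: "coeff q n = C0 * (\<Prod>m\<in>S. - c m)"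
  proof -
    have "coeff (\<Sum>j\<in>S. smult (- a j * K j) (\<Prod>m\<in>S-{j}. [:1, - c m:])) n = 0"
      by (rule coeff_eq_0) (use degsum n0 in linarith)
    thus ?thesis unfolding q_def by (simp add: cQ)
  qed
  have lead: "coeff p n = coeff q n"
  proof -
    have split: "(\<Prod>m\<in>S. - (a m * x)) = (\<Prod>m\<in>S. - a m) * x ^ n" for x
    proof -
      have "(\<Prod>m\<in>S. - (a m * x)) = (\<Prod>m\<in>S. (- a m) * x)" by (intro prod.cong refl) simp
      also have "\<dots> = (\<Prod>m\<in>S. - a m) * (\<Prod>m\<in>S. x)" by (rule prod.distrib)
      finally show ?thesis by (simp add: cardS)
    qed
    have "coeff p n = (\<Prod>m\<in>S. - a m) * (t - 1) ^ n"
      unfolding cp by (rule split)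
    moreover have "coeff q n = C0 * ((\<Prod>m\<in>S. - a m) * t ^ n)"
      unfolding cq c_def by (simp only: split)
    ultimately show ?thesis using t0 by (simp add: C0_def)
  qed
  define A where "A = (\<lambda>j. 1 / c j) ` S"
  have cardA: "card A = n"
  proof -
    have "inj_on (\<lambda>j. 1 / c j) S"
    proof (rule inj_onI)
      fix i j assume i: "i \<in> S" and j: "j \<in> S" and e: "1 / c i = 1 / c j"
      hence "a i = a j" using t0 by (simp add: c_def)
      thus "i = j" using inj_onD[OF inj _ i[unfolded S_def] j[unfolded S_def]] by blast
    qed
    thus ?thesis unfolding A_def using cardS by (simp add: card_image)
  qed
  have evals: "poly p z = poly q z" if z: "z \<in> A" for z
  proof -
    obtain j where j: "j \<in> S" and zj: "z = 1 / c j" using z A_def by auto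
    have ajn: "a j \<noteq> 0" using anz[OF j] .
    define N where "N = (\<Prod>m=1..n. (1 - t) / (a j * t) + 1 / a m)"
    define D where "D = (\<Prod>l\<in>{1..n} - {j}. 1 / a j - 1 / a l)"
    define P' where "P' = (\<Prod>m\<in>S-{j}. a m)"
    have Dnz: "D \<noteq> 0"
    proof -
      have "1 / a j - 1 / a l \<noteq> 0" if l: "l \<in> {1..n} - {j}" for l
      proof
        assume "1 / a j - 1 / a l = 0"
        hence "a j = a l" by simp
        hence "j = l" using inj_onD[OF inj _ j[unfolded S_def]] l by blast
        thus False using l by blast
      qed
      thus ?thesis unfolding D_def by (simp add: prod_zero_iff)
    qed
    have Kj: "K j = (-1) ^ n * N / D" by (simp add: K_def N_def D_def)
    have pz: "poly p z = (\<Prod>m\<in>S. a m) * N"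
    proof -
      have "poly p z = (\<Prod>m\<in>S. a m * ((1 - t) / (a j * t) + 1 / a m))"
        unfolding p_def poly_prod zj c_def
        by (intro prod.cong refl) (use anz ajn t0 in \<open>simp add: field_simps\<close>)
      thus ?thesis by (simp add: prod.distrib N_def S_def)
    qed
    have qz: "poly q z = - a j * K j * (\<Prod>m\<in>S-{j}. poly [:1, - c m:] z)"
    proof -
      have Q0: "poly Qp z = 0"
        unfolding Qp_def poly_prod using fin j ajn t0 by (auto simp: zj c_def prod_zero_iff intro!: bexI[of _ j])
      have other: "(\<Prod>m\<in>S-{i}. poly [:1, - c m:] z) = 0" if "i \<in> S - {j}" for i
        using that fin j ajn t0 by (auto simp: zj c_def prod_zero_iff intro!: bexI[of _ j])
      have "poly q z = (\<Sum>i\<in>S. - a i * K i * (\<Prod>m\<in>S-{i}. poly [:1, - c m:] z))"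
        unfolding q_def by (simp add: Q0 poly_sum poly_prod)
      also have "\<dots> = - a j * K j * (\<Prod>m\<in>S-{j}. poly [:1, - c m:] z)
            + (\<Sum>i\<in>S-{j}. - a i * K i * (\<Prod>m\<in>S-{i}. poly [:1, - c m:] z))"
        using fin j by (simp add: sum.remove)
      also have "(\<Sum>i\<in>S-{j}. - a i * K i * (\<Prod>m\<in>S-{i}. poly [:1, - c m:] z)) = 0"
      proof (intro sum.neutral ballI)
        fix i assume i: "i \<in> S - {j}"
        show "- a i * K i * (\<Prod>m\<in>S-{i}. poly [:1, - c m:] z) = 0"
          by (simp only: other[OF i] mult_zero_right)
      qed
      finally show ?thesis by simp
    qed
    have pr: "(\<Prod>m\<in>S-{j}. poly [:1, - c m:] z) = (-1) ^ (n - 1) * P' * D"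
    proof -
      have "(\<Prod>m\<in>S-{j}. poly [:1, - c m:] z) = (\<Prod>m\<in>S-{j}. (-1) * (a m * (1 / a j - 1 / a m)))"
        by (intro prod.cong refl) (use anz ajn t0 in \<open>auto simp: zj c_def field_simps\<close>)
      also have "\<dots> = (\<Prod>m\<in>S-{j}. (-1::real)) * ((\<Prod>m\<in>S-{j}. a m) * (\<Prod>m\<in>S-{j}. 1 / a j - 1 / a m))"
        by (simp only: prod.distrib)
      also have "\<dots> = (-1) ^ (n - 1) * P' * D"
        using fin j cardS by (simp add: P'_def D_def S_def)
      finally show ?thesis .
    qed
    have Sa: "(\<Prod>m\<in>S. a m) = a j * P'"
      using fin j by (simp add: P'_def prod.remove)
    have "poly q z = - a j * ((-1) ^ n * N / D) * ((-1) ^ (n - 1) * P' * D)"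
      using qz pr Kj by simp
    also have "\<dots> = - ((-1) ^ n * (-1) ^ (n - 1)) * (a j * P') * N"
      using Dnz by (simp add: field_simps)
    also have "\<dots> = poly p z" using sign_aux[OF n1] pz Sa by simp
    finally show ?thesis by simp
  qed
  have pq: "p = q"
    by (rule poly_eqI_degree_lead_coeff[OF lead _ degp degq evals, of A]) (simp add: cardA)
  show ?thesis
    using LHS RHS pq unfolding K_def C0_def by simp
qed

theorem mainTheorem1:
  fixes a :: "nat \<Rightarrow> real" and n :: nat and t :: real
  assumes "n \<ge> 1" and "\<And>m. m \<in> {1..n} \<Longrightarrow> a m > 0"
  shows "Theta a n t =
           (\<Prod>m=1..n. 1 + fps_const (a m) * fps_X * inverse (1 - fps_const (a m * t) * fps_X))
       \<and> Theta a n t =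
           fps_exp 1 oo Abs_fps (\<lambda>j. if j = 0 then 0
                                   else powsum a n j * (t ^ j - (t - 1) ^ j) / real j)
       \<and> (t \<noteq> 0 \<and> inj_on a {1..n} \<longrightarrow>
           Theta a n t =
             fps_const ((t - 1) ^ n / t ^ n)
             + (\<Sum>j=1..n. fps_const ((-1) ^ n *
                   (\<Prod>m=1..n. (1 - t) / (a j * t) + 1 / a m) /
                   (\<Prod>l\<in>{1..n} - {j}. 1 / a j - 1 / a l))
                 * inverse (fps_const t * fps_X - fps_const (1 / a j))))"
proof (intro conjI impI)
  show "Theta a n t =
           (\<Prod>m=1..n. 1 + fps_const (a m) * fps_X * inverse (1 - fps_const (a m * t) * fps_X))"
    unfolding Theta_prod by (simp add: inverse_G)
  show "Theta a n t =
           fps_exp 1 oo Abs_fps (\<lambda>j. if j = 0 then 0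
                                   else powsum a n j * (t ^ j - (t - 1) ^ j) / real j)"
    using part_exp[of a n t] by (simp add: Lser_def)
next
  assume "t \<noteq> 0 \<and> inj_on a {1..n}"
  thus "Theta a n t =
             fps_const ((t - 1) ^ n / t ^ n)
             + (\<Sum>j=1..n. fps_const ((-1) ^ n *
                   (\<Prod>m=1..n. (1 - t) / (a j * t) + 1 / a m) /
                   (\<Prod>l\<in>{1..n} - {j}. 1 / a j - 1 / a l))
                 * inverse (fps_const t * fps_X - fps_const (1 / a j)))"
    using part_frac[of n a t] assms by blast
qed

end
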